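(* Let $(X,\rho)$ be a complete locally compact $\mathbb R$-tree and let $\mathcal B$ be the family of subsets of $\mathcal O_+(X)$ described below. For any $\mathcal U_1,\mathcal U_2\in\mathcal B$ and any order $\tau\in\mathcal U_1\cap\mathcal U_2$ there exists $\mathcal U\in\mathcal B$ with $\tau\in\mathcal U\subset\mathcal U_1\cap\mathcal U_2$.
   Context: An $\mathbb R$-tree is a geodesic metric space in which any two points are joined by a unique segment and $[xy]\subset[xz]\cup[zy]$ for all $x,y,z$. $\mathcal O_+(X)$ is the set of partial orders $\tau$ on $X$ such that any two points have a supremum $x\vee y$, $x\,\tau\, z\,\tau\, y$ implies $\rho(x,z)+\rho(z,y)=\rho(x,y)$, $\rho(x,y)=\rho(x,x\vee y)+\rho(x\vee y,y)$ for all $x,y$, and every upper cone $\{y: x\,\tau\, y\}$ is linearly ordered. $\mathcal O_+^r(X)$ consists of those having a greatest element (root); for $y\in X$, $\preceq_{(y)}$ is the order with root $y$ ($s\preceq_{(y)}t$ iff $t\in[ys]$). $\mathcal O_+^r(X)$ carries the Hausdorff metric $\operatorname{Hd}$ of orders viewed as subsets of $X\times X$ with metric $d_+((x_1,x_2),(y_1,y_2))=\rho(x_1,y_1)+\rho(x_2,y_2)$. $\mathcal B$ consists of all open subsets of $(\mathcal O_+^r(X),\operatorname{Hd})$ together with all sets $\mathcal U_{(x,y)}=\{\tau\in\mathcal O_+(X): x\,\tau\, y\}\setminus\{\preceq_{(y)}\}$ for $x\ne y$ in $X$. *)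

theory Defs
  imports "HOL-Analysis.Analysis"
begin

(* The R-tree X is the whole carrier type 'a (a metric space), rho = dist. *)

definition is_segment :: "'a::metric_space \<Rightarrow> 'a \<Rightarrow> 'a set \<Rightarrow> bool" where
  "is_segment x y S \<longleftrightarrow> (\<exists>\<gamma>::real \<Rightarrow> 'a. \<gamma> 0 = x \<and> \<gamma> (dist x y) = y \<and>
      (\<forall>s\<in>{0..dist x y}. \<forall>t\<in>{0..dist x y}. dist (\<gamma> s) (\<gamma> t) = \<bar>s - t\<bar>) \<and>
      S = \<gamma> ` {0..dist x y})"

definition seg :: "'a::metric_space \<Rightarrow> 'a \<Rightarrow> 'a set" where
  "seg x y = (THE S. is_segment x y S)"

definition R_tree :: "'a::metric_space itself \<Rightarrow> bool" where
  "R_tree _ \<longleftrightarrow> (\<forall>x y::'a. \<exists>!S. is_segment x y S) \<and>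
     (\<forall>x y z::'a. seg x y \<subseteq> seg x z \<union> seg z y)"

definition is_sup :: "('a \<times> 'a) set \<Rightarrow> 'a \<Rightarrow> 'a \<Rightarrow> 'a \<Rightarrow> bool" where
  "is_sup \<tau> x y s \<longleftrightarrow> (x, s) \<in> \<tau> \<and> (y, s) \<in> \<tau> \<and>
     (\<forall>u. (x, u) \<in> \<tau> \<and> (y, u) \<in> \<tau> \<longrightarrow> (s, u) \<in> \<tau>)"

definition osup :: "('a \<times> 'a) set \<Rightarrow> 'a \<Rightarrow> 'a \<Rightarrow> 'a" where
  "osup \<tau> x y = (THE s. is_sup \<tau> x y s)"

definition Oplus :: "('a::metric_space \<times> 'a) set set" where
  "Oplus = {\<tau>. partial_order_on UNIV \<tau> \<and>
      (\<forall>x y. \<exists>s. is_sup \<tau> x y s) \<and>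
      (\<forall>x y z. (x, z) \<in> \<tau> \<and> (z, y) \<in> \<tau> \<longrightarrow> dist x z + dist z y = dist x y) \<and>
      (\<forall>x y. dist x y = dist x (osup \<tau> x y) + dist (osup \<tau> x y) y) \<and>
      (\<forall>x a b. (x, a) \<in> \<tau> \<and> (x, b) \<in> \<tau> \<longrightarrow> (a, b) \<in> \<tau> \<or> (b, a) \<in> \<tau>)}"

definition Oplus_r :: "('a::metric_space \<times> 'a) set set" where
  "Oplus_r = {\<tau> \<in> Oplus. \<exists>r. \<forall>x. (x, r) \<in> \<tau>}"

definition root_order :: "'a::metric_space \<Rightarrow> ('a \<times> 'a) set" where
  "root_order y = {(s, t). t \<in> seg y s}"

definition dplus :: "('a::metric_space \<times> 'a) \<Rightarrow> ('a \<times> 'a) \<Rightarrow> real" where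
  "dplus p q = dist (fst p) (fst q) + dist (snd p) (snd q)"

definition Hd :: "('a::metric_space \<times> 'a) set \<Rightarrow> ('a \<times> 'a) set \<Rightarrow> ereal" where
  "Hd A B = max (SUP a\<in>A. INF b\<in>B. ereal (dplus a b)) (SUP b\<in>B. INF a\<in>A. ereal (dplus a b))"

definition Hd_open :: "('a::metric_space \<times> 'a) set set \<Rightarrow> bool" where
  "Hd_open U \<longleftrightarrow> U \<subseteq> Oplus_r \<and>
     (\<forall>\<tau>\<in>U. \<exists>e>0. \<forall>\<sigma>\<in>Oplus_r. Hd \<tau> \<sigma> < ereal e \<longrightarrow> \<sigma> \<in> U)"

definition U_pair :: "'a::metric_space \<Rightarrow> 'a \<Rightarrow> ('a \<times> 'a) set set" where
  "U_pair x y = {\<tau> \<in> Oplus. (x, y) \<in> \<tau>} - {root_order y}"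

definition Bfam :: "('a::metric_space \<times> 'a) set set set" where
  "Bfam = {U. Hd_open U} \<union> {U_pair x y | x y. x \<noteq> y}"

end

theory Submission
  imports Defs
begin

abbreviation betw :: "'a::metric_space \<Rightarrow> 'a \<Rightarrow> 'a \<Rightarrow> bool" where
  "betw x z y \<equiv> dist x z + dist z y = dist x y"

lemma Oplus_refl: "\<tau> \<in> Oplus \<Longrightarrow> (x, x) \<in> \<tau>"
  unfolding Oplus_def partial_order_on_def preorder_on_def refl_on_def by auto

lemma Oplus_antisym: "\<tau> \<in> Oplus \<Longrightarrow> (x, y) \<in> \<tau> \<Longrightarrow> (y, x) \<in> \<tau> \<Longrightarrow> x = y"
  unfolding Oplus_def partial_order_on_def antisym_def by auto

lemma Oplus_trans: "\<tau> \<in> Oplus \<Longrightarrow> (x, y) \<in> \<tau> \<Longrightarrow> (y, z) \<in> \<tau> \<Longrightarrow> (x, z) \<in> \<tau>"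
  unfolding Oplus_def partial_order_on_def preorder_on_def trans_def by blast

lemma Oplus_betw: "\<tau> \<in> Oplus \<Longrightarrow> (x, z) \<in> \<tau> \<Longrightarrow> (z, y) \<in> \<tau> \<Longrightarrow> betw x z y"
  unfolding Oplus_def by blast

lemma Oplus_cone: "\<tau> \<in> Oplus \<Longrightarrow> (x, a) \<in> \<tau> \<Longrightarrow> (x, b) \<in> \<tau> \<Longrightarrow> (a, b) \<in> \<tau> \<or> (b, a) \<in> \<tau>"
  unfolding Oplus_def by blast

lemma Oplus_sup:
  assumes "\<tau> \<in> Oplus"
  shows "(x, osup \<tau> x y) \<in> \<tau> \<and> (y, osup \<tau> x y) \<in> \<tau> \<and> betw x (osup \<tau> x y) y"
proof -
  obtain s where s: "is_sup \<tau> x y s" using assms unfolding Oplus_def by blast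
  have "is_sup \<tau> x y (osup \<tau> x y)"
    unfolding osup_def
  proof (rule theI[of _ s])
    show "is_sup \<tau> x y s" by fact
    fix s' assume "is_sup \<tau> x y s'"
    with s show "s' = s" unfolding is_sup_def using Oplus_antisym[OF assms] by blast
  qed
  moreover have "dist x y = dist x (osup \<tau> x y) + dist (osup \<tau> x y) y"
    using assms unfolding Oplus_def by blast
  ultimately show ?thesis unfolding is_sup_def by simp
qed

lemma lemA1:
  assumes o: "\<sigma> \<in> Oplus" and ab: "(a, b) \<in> \<sigma>" and B: "betw a c b"
  shows "(a, c) \<in> \<sigma>"
proof -
  define u where "u = osup \<sigma> a c"
  have au: "(a, u) \<in> \<sigma>" and cu: "(c, u) \<in> \<sigma>" and Bu: "betw a u c"
    using Oplus_sup[OF o, of a c] unfolding u_def by auto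
  have "u = c"
  proof (cases "(u, b) \<in> \<sigma>")
    case True
    have "betw a u b" using Oplus_betw[OF o au True] .
    moreover have "betw c u b" using Oplus_betw[OF o cu True] .
    ultimately have "dist u c = 0" using B Bu dist_commute[of u c] dist_commute[of c u]
      by (smt (verit) zero_le_dist)
    then show ?thesis by simp
  next
    case False
    then have "(b, u) \<in> \<sigma>" using Oplus_cone[OF o au ab] by blast
    then have "betw a b u" using Oplus_betw[OF o ab] by blast
    then have "dist u c = 0" using B Bu
      by (smt (verit) dist_commute zero_le_dist)
    then show ?thesis by simp
  qed
  then show ?thesis using au by simp
qed

lemma lemA2:
  assumes o: "\<sigma> \<in> Oplus" and ab: "(a, b) \<in> \<sigma>" and B: "betw a c b"
  shows "(c, b) \<in> \<sigma>"
proof -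
  have ac: "(a, c) \<in> \<sigma>" using lemA1[OF assms] .
  show ?thesis
  proof (rule ccontr)
    assume "(c, b) \<notin> \<sigma>"
    then have "(b, c) \<in> \<sigma>" using Oplus_cone[OF o ac ab] by blast
    then have "betw a b c" using Oplus_betw[OF o ab] by blast
    then have "dist b c = 0" using B by (smt (verit) dist_commute zero_le_dist)
    then have "b = c" by simp
    then show False using \<open>(c, b) \<notin> \<sigma>\<close> Oplus_refl[OF o] by simp
  qed
qed

lemma lemC:
  assumes o: "\<sigma> \<in> Oplus" and qb: "(q, b) \<in> \<sigma>" and ne: "q \<noteq> b" and B: "betw x q b"
  shows "(x, b) \<in> \<sigma>"
proof -
  define u where "u = osup \<sigma> x q"
  have xu: "(x, u) \<in> \<sigma>" and qu: "(q, u) \<in> \<sigma>" and Bu: "betw x u q"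
    using Oplus_sup[OF o, of x q] unfolding u_def by auto
  show ?thesis
  proof (cases "(u, b) \<in> \<sigma>")
    case True
    then show ?thesis using Oplus_trans[OF o xu] by blast
  next
    case False
    then have "(b, u) \<in> \<sigma>" using Oplus_cone[OF o qu qb] by blast
    then have "betw q b u" using Oplus_betw[OF o qb] by blast
    moreover have "dist x b \<le> dist x u + dist u b" by (rule dist_triangle)
    ultimately have "dist q b \<le> 0" using B Bu
      by (smt (verit) dist_commute zero_le_dist)
    then show ?thesis using ne by simp
  qed
qed


lemma R1:
  assumes "R_tree TYPE('a::metric_space)"
  shows "is_segment (x::'a) y (seg x y)"
proof -
  have "\<exists>!S. is_segment x y S" using assms unfolding R_tree_def by blast
  then show ?thesis unfolding seg_def by (rule theI')
qed

lemma R2: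
  assumes "R_tree TYPE('a::metric_space)" and "(z::'a) \<in> seg x y"
  shows "betw x z y"
proof -
  obtain \<gamma> where g0: "\<gamma> 0 = x" and gL: "\<gamma> (dist x y) = y"
    and iso: "\<forall>s\<in>{0..dist x y}. \<forall>t\<in>{0..dist x y}. dist (\<gamma> s) (\<gamma> t) = \<bar>s - t\<bar>"
    and S: "seg x y = \<gamma> ` {0..dist x y}"
    using R1[OF assms(1), of x y] unfolding is_segment_def by blast
  obtain t where t: "t \<in> {0..dist x y}" and z: "z = \<gamma> t" using assms(2) S by blast
  have "dist x z = t" using iso[rule_format, of 0 t] t g0 z by auto
  moreover have "dist z y = dist x y - t" using iso[rule_format, of t "dist x y"] t gL z by auto
  ultimately show ?thesis by simp
qed

lemma R3:
  assumes R: "R_tree TYPE('a::metric_space)" and B: "betw x (z::'a) y"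
  shows "z \<in> seg x y"
proof -
  define m where "m = dist x z"
  define n where "n = dist z y"
  obtain g1 where a0: "g1 0 = x" and aL: "g1 m = z"
    and iso1: "\<forall>s\<in>{0..m}. \<forall>t\<in>{0..m}. dist (g1 s) (g1 t) = \<bar>s - t\<bar>"
    using R1[OF R, of x z] unfolding is_segment_def m_def by blast
  obtain g2 where b0: "g2 0 = z" and bL: "g2 n = y"
    and iso2: "\<forall>s\<in>{0..n}. \<forall>t\<in>{0..n}. dist (g2 s) (g2 t) = \<bar>s - t\<bar>"
    using R1[OF R, of z y] unfolding is_segment_def n_def by blast
  have m0: "m \<ge> 0" and n0: "n \<ge> 0" unfolding m_def n_def by auto
  have L: "dist x y = m + n" using B unfolding m_def n_def by simp
  define \<gamma> where "\<gamma> t = (if t \<le> m then g1 t else g2 (t - m))" for t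
  have mixed: "dist (\<gamma> s) (\<gamma> t) = t - s" if s: "0 \<le> s" "s \<le> m" and t: "m < t" "t \<le> m + n" for s t
  proof -
    have gs: "\<gamma> s = g1 s" and gt: "\<gamma> t = g2 (t - m)" using s t unfolding \<gamma>_def by auto
    have d1: "dist (g1 s) z = m - s" using iso1[rule_format, of s m] s aL by auto
    have d2: "dist z (g2 (t - m)) = t - m" using iso2[rule_format, of 0 "t - m"] t b0 by auto
    have d3: "dist x (g1 s) = s" using iso1[rule_format, of 0 s] s a0 by auto
    have d4: "dist (g2 (t - m)) y = n - (t - m)" using iso2[rule_format, of "t - m" n] t bL by auto
    have "dist (g1 s) (g2 (t - m)) \<le> dist (g1 s) z + dist z (g2 (t - m))" by (rule dist_triangle)
    moreover have "dist x y \<le> dist x (g1 s) + dist (g1 s) (g2 (t - m)) + dist (g2 (t - m)) y"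
      by (metis add.commute add_le_cancel_left dist_triangle order_trans)
    ultimately show ?thesis unfolding gs gt using d1 d2 d3 d4 L by linarith
  qed
  have "is_segment x y (\<gamma> ` {0..dist x y})"
    unfolding is_segment_def
  proof (intro exI conjI ballI)
    show "\<gamma> 0 = x" using m0 a0 unfolding \<gamma>_def by simp
    show "\<gamma> (dist x y) = y"
    proof (cases "n = 0")
      case True
      then have "z = y" using n_def by simp
      then show ?thesis using True L aL unfolding \<gamma>_def by simp
    next
      case False
      then show ?thesis using L n0 bL unfolding \<gamma>_def by simp
    qed
    fix s t assume s: "s \<in> {0..dist x y}" and t: "t \<in> {0..dist x y}"
    show "dist (\<gamma> s) (\<gamma> t) = \<bar>s - t\<bar>"
    proof (cases "s \<le> m")
      case sm: True
      show ?thesis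
      proof (cases "t \<le> m")
        case True
        then show ?thesis using sm s t iso1 unfolding \<gamma>_def by auto
      next
        case False
        then show ?thesis using mixed[of s t] sm s t L by auto
      qed
    next
      case sm: False
      show ?thesis
      proof (cases "t \<le> m")
        case True
        then show ?thesis using mixed[of t s] sm s t L by (auto simp: dist_commute)
      next
        case False
        then have "dist (g2 (s - m)) (g2 (t - m)) = \<bar>(s - m) - (t - m)\<bar>"
          using sm s t L by (intro iso2[rule_format]) auto
        then show ?thesis using sm False unfolding \<gamma>_def by simp
      qed
    qed
  qed auto
  moreover have "\<exists>!S. is_segment x y S" using R unfolding R_tree_def by blast
  ultimately have "seg x y = \<gamma> ` {0..dist x y}" using R1[OF R, of x y] by blast
  moreover have "\<gamma> m = z" using aL unfolding \<gamma>_def by simp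
  moreover have "m \<in> {0..dist x y}" using m0 n0 L by simp
  ultimately show ?thesis by blast
qed


lemma root_in:
  assumes R: "R_tree TYPE('a::metric_space)"
  shows "((s::'a), y) \<in> root_order y"
  unfolding root_order_def using R3[OF R, of y y s] by simp

lemma Hd_ex:
  assumes "Hd \<tau> \<sigma> < ereal e" and "b \<in> \<sigma>"
  shows "\<exists>a\<in>\<tau>. dplus a b < e"
proof -
  have "(INF a\<in>\<tau>. ereal (dplus a b)) \<le> (SUP b\<in>\<sigma>. INF a\<in>\<tau>. ereal (dplus a b))"
    using assms(2) by (rule SUP_upper)
  also have "\<dots> \<le> Hd \<tau> \<sigma>" unfolding Hd_def by simp
  finally have "(INF a\<in>\<tau>. ereal (dplus a b)) < ereal e" using assms(1) by simp
  then show ?thesis by (simp add: INF_less_iff)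
qed

lemma Oplus_r_root: "\<tau> \<in> Oplus_r \<Longrightarrow> \<exists>r. \<forall>x. (x, r) \<in> \<tau>"
  unfolding Oplus_r_def by blast

lemma lemK:
  assumes R: "R_tree TYPE('a::metric_space)"
    and t: "\<tau> \<in> Oplus_r" and u: "\<tau> \<in> U_pair x (y::'a)"
  shows "\<exists>e>0. \<forall>\<sigma>\<in>Oplus_r. Hd \<tau> \<sigma> < ereal e \<longrightarrow> \<sigma> \<in> U_pair x y"
proof -
  have o: "\<tau> \<in> Oplus" using t unfolding Oplus_r_def by blast
  obtain r where r: "\<And>z. (z, r) \<in> \<tau>" using Oplus_r_root[OF t] by blast
  have xy: "(x, y) \<in> \<tau>" and nr: "\<tau> \<noteq> root_order y" using u unfolding U_pair_def by auto
  have "y \<noteq> r"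
  proof
    assume yr: "y = r"
    have "\<tau> = root_order r"
    proof (intro set_eqI iffI)
      fix p assume p: "p \<in> \<tau>"
      obtain s t where st: "p = (s, t)" by (cases p)
      have "betw s t r" using Oplus_betw[OF o _ r] p st by blast
      then have "betw r t s" by (simp add: dist_commute add.commute)
      then show "p \<in> root_order r" using R3[OF R] st unfolding root_order_def by simp
    next
      fix p assume p: "p \<in> root_order r"
      obtain s t where st: "p = (s, t)" by (cases p)
      have "betw r t s" using R2[OF R] p st unfolding root_order_def by simp
      then have "betw s t r" by (simp add: dist_commute add.commute)
      then show "p \<in> \<tau>" using lemA1[OF o r] st by simp
    qed
    then show False using nr yr by simp
  qed
  define e where "e = dist y r"
  have e0: "e > 0" using \<open>y \<noteq> r\<close> unfolding e_def by simp
  have xr: "(x, r) \<in> \<tau>" by (rule r)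
  have Bxyr: "betw x y r" using Oplus_betw[OF o xy r] .
  have yseg: "y \<in> seg x r" using R3[OF R Bxyr] .
  show ?thesis
  proof (intro exI conjI ballI impI)
    show "e > 0" by fact
    fix \<sigma> assume s: "\<sigma> \<in> Oplus_r" and hd: "Hd \<tau> \<sigma> < ereal e"
    have os: "\<sigma> \<in> Oplus" using s unfolding Oplus_r_def by blast
    obtain r' where r': "\<And>z. (z, r') \<in> \<sigma>" using Oplus_r_root[OF s] by blast
    obtain a where a: "a \<in> \<tau>" "dplus a (r, r') < e" using Hd_ex[OF hd r'[of r]] by blast
    obtain s1 t1 where st: "a = (s1, t1)" by (cases a)
    have "betw s1 t1 r" using Oplus_betw[OF o _ r] a st by blast
    then have "dist t1 r \<le> dist s1 r" by (smt (verit) zero_le_dist)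
    moreover have "dist s1 r + dist t1 r' < e" using a st unfolding dplus_def by simp
    moreover have "dist r r' \<le> dist r t1 + dist t1 r'" by (rule dist_triangle)
    ultimately have rr: "dist r r' < e" by (simp add: dist_commute)
    have "seg x r \<subseteq> seg x r' \<union> seg r' r" using R unfolding R_tree_def by blast
    with yseg have "y \<in> seg x r' \<union> seg r' r" by blast
    moreover have "y \<notin> seg r' r"
    proof
      assume "y \<in> seg r' r"
      then have "betw r' y r" by (rule R2[OF R])
      then have "dist y r \<le> dist r' r" by (smt (verit) zero_le_dist)
      then show False using rr unfolding e_def by (simp add: dist_commute)
    qed
    ultimately have "betw x y r'" using R2[OF R] by blast
    then have xys: "(x, y) \<in> \<sigma>" using lemA1[OF os r'] by blast
    have "\<sigma> \<noteq> root_order y"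
    proof
      assume "\<sigma> = root_order y"
      then have "(r', y) \<in> \<sigma>" using root_in[OF R] by simp
      then have "y = r'" using Oplus_antisym[OF os r'[of y]] by simp
      then show False using rr unfolding e_def by (simp add: dist_commute)
    qed
    then show "\<sigma> \<in> U_pair x y" using xys os unfolding U_pair_def by simp
  qed
qed

lemma open_at:
  assumes R: "R_tree TYPE('a::metric_space)"
    and U: "U \<in> (Bfam :: ('a \<times> 'a) set set set)" and t: "\<tau> \<in> U" "\<tau> \<in> Oplus_r"
  shows "\<exists>e>0. \<forall>\<sigma>\<in>Oplus_r. Hd \<tau> \<sigma> < ereal e \<longrightarrow> \<sigma> \<in> U"
proof (cases "Hd_open U")
  case True
  then show ?thesis using t unfolding Hd_open_def by blast
next
  case False
  then obtain x y where "U = U_pair x y" using U unfolding Bfam_def by blast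
  then show ?thesis using lemK[OF R t(2)] t(1) by simp
qed


lemma pair_sub:
  assumes R: "R_tree TYPE('a::metric_space)" and o: "\<tau> \<in> Oplus"
    and xy: "(x, y) \<in> \<tau>" and yq: "(y, q) \<in> \<tau>" and qb: "(q, b) \<in> \<tau>" and ne: "q \<noteq> (b::'a)"
  shows "U_pair q b \<subseteq> U_pair x y"
proof
  fix \<sigma> assume s: "\<sigma> \<in> U_pair q b"
  have os: "\<sigma> \<in> Oplus" and qbs: "(q, b) \<in> \<sigma>" using s unfolding U_pair_def by auto
  have xq: "(x, q) \<in> \<tau>" using Oplus_trans[OF o xy yq] .
  have yb: "(y, b) \<in> \<tau>" using Oplus_trans[OF o yq qb] .
  have xb: "(x, b) \<in> \<sigma>" using lemC[OF os qbs ne Oplus_betw[OF o xq qb]] .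
  have B: "betw x y b" using Oplus_betw[OF o xy yb] .
  have xys: "(x, y) \<in> \<sigma>" using lemA1[OF os xb B] .
  have ybs: "(y, b) \<in> \<sigma>" using lemA2[OF os xb B] .
  have "\<sigma> \<noteq> root_order y"
  proof
    assume "\<sigma> = root_order y"
    then have "(b, y) \<in> \<sigma>" using root_in[OF R] by simp
    then have "y = b" using Oplus_antisym[OF os ybs] by simp
    then have "q = y" using Oplus_antisym[OF o yq] qb by simp
    then show False using ne \<open>y = b\<close> by simp
  qed
  then show "\<sigma> \<in> U_pair x y" using os xys unfolding U_pair_def by simp
qed

theorem lemma2:
  assumes "R_tree TYPE('a::metric_space)"
    and "complete (UNIV :: 'a set)"
    and "locally compact (UNIV :: 'a set)"
    and "U1 \<in> (Bfam :: ('a \<times> 'a) set set set)" and "U2 \<in> Bfam"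
    and "\<tau> \<in> U1 \<inter> U2"
  shows "\<exists>U\<in>Bfam. \<tau> \<in> U \<and> U \<subseteq> U1 \<inter> U2"
proof (cases "\<tau> \<in> Oplus_r")
  case True
  define U where "U = U1 \<inter> U2 \<inter> Oplus_r"
  have "Hd_open U"
    unfolding Hd_open_def
  proof (intro conjI ballI)
    show "U \<subseteq> Oplus_r" unfolding U_def by blast
    fix t assume t: "t \<in> U"
    have tU: "t \<in> U1" "t \<in> U2" "t \<in> Oplus_r" using t unfolding U_def by auto
    obtain e1 where e1: "e1 > 0" "\<forall>\<sigma>\<in>Oplus_r. Hd t \<sigma> < ereal e1 \<longrightarrow> \<sigma> \<in> U1"
      using open_at[OF assms(1) assms(4) tU(1) tU(3)] by blast
    obtain e2 where e2: "e2 > 0" "\<forall>\<sigma>\<in>Oplus_r. Hd t \<sigma> < ereal e2 \<longrightarrow> \<sigma> \<in> U2"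
      using open_at[OF assms(1) assms(5) tU(2) tU(3)] by blast
    show "\<exists>e>0. \<forall>\<sigma>\<in>Oplus_r. Hd t \<sigma> < ereal e \<longrightarrow> \<sigma> \<in> U"
    proof (intro exI[of _ "min e1 e2"] conjI ballI impI)
      show "min e1 e2 > 0" using e1 e2 by simp
      fix \<sigma> assume s: "\<sigma> \<in> Oplus_r" and h: "Hd t \<sigma> < ereal (min e1 e2)"
      have "Hd t \<sigma> < ereal e1" using h by (rule less_le_trans) simp
      moreover have "Hd t \<sigma> < ereal e2" using h by (rule less_le_trans) simp
      ultimately show "\<sigma> \<in> U" using e1(2) e2(2) s unfolding U_def by simp
    qed
  qed
  then have "U \<in> Bfam" unfolding Bfam_def by blast
  moreover have "\<tau> \<in> U" using True assms(6) unfolding U_def by simp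
  moreover have "U \<subseteq> U1 \<inter> U2" unfolding U_def by auto
  ultimately show ?thesis by auto
next
  case False
  have n1: "\<not> Hd_open U1" using False assms(6) unfolding Hd_open_def by auto
  have n2: "\<not> Hd_open U2" using False assms(6) unfolding Hd_open_def by auto
  obtain x y where U1: "U1 = U_pair x y"
    using assms(4) n1 unfolding Bfam_def by auto
  obtain x' y' where U2: "U2 = U_pair x' y'"
    using assms(5) n2 unfolding Bfam_def by auto
  have o: "\<tau> \<in> Oplus" and xy: "(x, y) \<in> \<tau>" and xy': "(x', y') \<in> \<tau>"
    using assms(6) unfolding U1 U2 U_pair_def by auto
  define q where "q = osup \<tau> y y'"
  have yq: "(y, q) \<in> \<tau>" and yq': "(y', q) \<in> \<tau>" using Oplus_sup[OF o, of y y'] unfolding q_def by auto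
  have "\<not> (\<forall>z. (z, q) \<in> \<tau>)" using False o unfolding Oplus_r_def by auto
  then obtain z where z: "(z, q) \<notin> \<tau>" by auto
  define b where "b = osup \<tau> q z"
  have qb: "(q, b) \<in> \<tau>" and zb: "(z, b) \<in> \<tau>" using Oplus_sup[OF o, of q z] unfolding b_def by auto
  have ne: "q \<noteq> b" using z zb by blast
  have "\<tau> \<noteq> root_order b"
  proof
    assume "\<tau> = root_order b"
    then have "\<forall>s. (s, b) \<in> \<tau>" using root_in[OF assms(1)] by simp
    then show False using False o unfolding Oplus_r_def by blast
  qed
  then have tin: "\<tau> \<in> U_pair q b" using o qb unfolding U_pair_def by simp
  have "U_pair q b \<in> Bfam" using ne unfolding Bfam_def by blast
  moreover have "U_pair q b \<subseteq> U1 \<inter> U2"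
    using pair_sub[OF assms(1) o xy yq qb ne] pair_sub[OF assms(1) o xy' yq' qb ne] U1 U2 by blast
  ultimately show ?thesis using tin by blast
qed

end
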